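(* Let $G$ be a graph that has exactly two odd cycles, and suppose these two cycles share no edge. Then the two cycles intersect either in a single vertex or not at all.
   Context: All graphs are finite and simple. An odd cycle is a cycle (subgraph) of odd length. *)

theory Defs
  imports Main
begin

definition simple_graph :: "'a set \<Rightarrow> 'a set set \<Rightarrow> bool" where
  "simple_graph V E \<longleftrightarrow> finite V \<and> (\<forall>e\<in>E. e \<subseteq> V \<and> card e = 2)"

definition cycle_edges :: "'a list \<Rightarrow> 'a set set" where
  "cycle_edges xs = {{xs ! i, xs ! ((i + 1) mod length xs)} | i. i < length xs}"

text \<open>A cycle of the graph, viewed as a subgraph, is identified with its edge set:
  the edge set of a sequence of at least 3 distinct vertices, cyclically adjacent.\<close>
definition is_cycle :: "'a set \<Rightarrow> 'a set set \<Rightarrow> 'a set set \<Rightarrow> bool" where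
  "is_cycle V E C \<longleftrightarrow> (\<exists>xs. distinct xs \<and> length xs \<ge> 3 \<and> set xs \<subseteq> V
      \<and> cycle_edges xs \<subseteq> E \<and> C = cycle_edges xs)"

definition cycle_verts :: "'a set set \<Rightarrow> 'a set" where
  "cycle_verts C = \<Union> C"

definition odd_cycle :: "'a set \<Rightarrow> 'a set set \<Rightarrow> 'a set set \<Rightarrow> bool" where
  "odd_cycle V E C \<longleftrightarrow> is_cycle V E C \<and> odd (card C)"

end

theory Submission
  imports Defs
begin

fun pedges :: "'a list \<Rightarrow> 'a set set" where
  "pedges (x # y # zs) = insert {x, y} (pedges (y # zs))"
| "pedges _ = {}"

lemma pedges_append:
  assumes "Q \<noteq> []" "P \<noteq> []" "hd P = last Q"
  shows "pedges (Q @ tl P) = pedges Q \<union> pedges P"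
  using assms
proof (induction Q rule: pedges.induct)
  case (1 x y zs)
  then show ?case by auto
next
  case ("2_2" v)
  then show ?case by (metis Un_empty_left append_Cons append_Nil last_ConsL list.collapse pedges.simps(3))
next
  case "2_1"
  then show ?case by simp
qed

lemma pedges_nth: "pedges W = {{W ! i, W ! Suc i} | i. Suc i < length W}"
proof (induction W rule: pedges.induct)
  case (1 x y zs)
  show ?case
  proof
    show "pedges (x # y # zs) \<subseteq> {{(x # y # zs) ! i, (x # y # zs) ! Suc i} |i. Suc i < length (x # y # zs)}"
    proof
      fix e assume "e \<in> pedges (x # y # zs)"
      then consider "e = {x,y}" | "e \<in> pedges (y # zs)" by auto
      then show "e \<in> {{(x # y # zs) ! i, (x # y # zs) ! Suc i} |i. Suc i < length (x # y # zs)}"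
      proof cases
        case 1 then show ?thesis by force
      next
        case 2
        then obtain i where "e = {(y#zs)!i, (y#zs)! Suc i}" "Suc i < length (y#zs)" using "1.IH" by auto
        then show ?thesis by (intro CollectI exI[of _ "Suc i"]) auto
      qed
    qed
  next
    show "{{(x # y # zs) ! i, (x # y # zs) ! Suc i} |i. Suc i < length (x # y # zs)} \<subseteq> pedges (x # y # zs)"
    proof
      fix e assume "e \<in> {{(x # y # zs) ! i, (x # y # zs) ! Suc i} |i. Suc i < length (x # y # zs)}"
      then obtain i where i: "e = {(x # y # zs) ! i, (x # y # zs) ! Suc i}" "Suc i < length (x # y # zs)" by auto
      show "e \<in> pedges (x # y # zs)"
      proof (cases i)
        case 0 then show ?thesis using i by simp
      next
        case (Suc j)
        then have "e \<in> pedges (y # zs)" using i "1.IH" by auto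
        then show ?thesis by simp
      qed
    qed
  qed
qed auto

lemma cycle_edges_pedges:
  assumes "xs \<noteq> []"
  shows "cycle_edges xs = pedges (xs @ [hd xs])"
proof -
  have a: "(xs @ [hd xs]) ! i = xs ! i" if "i < length xs" for i
    using that by (simp add: nth_append)
  have b: "(xs @ [hd xs]) ! Suc i = xs ! (Suc i mod length xs)" if "i < length xs" for i
    using that assms by (cases "Suc i < length xs") (auto simp: nth_append hd_conv_nth mod_if)
  show ?thesis unfolding cycle_edges_def pedges_nth
    using a b apply (auto simp: Suc_eq_plus1[symmetric])
    by (metis a b)
qed

lemma pedges_take: "pedges (take j W) \<subseteq> pedges W"
  unfolding pedges_nth by auto

lemma pedges_drop: "pedges (drop j W) \<subseteq> pedges W"
  unfolding pedges_nth by auto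

lemma pedges_rev: "pedges (rev W) = pedges W"
proof (induction W rule: pedges.induct)
  case (1 x y zs)
  have "rev (x # y # zs) = rev (y # zs) @ tl [y, x]" by simp
  then have "pedges (rev (x # y # zs)) = pedges (rev (y # zs)) \<union> pedges [y, x]"
    using pedges_append[of "rev (y # zs)" "[y,x]"] by simp
  then show ?case using 1 by (auto simp: insert_commute)
qed auto

lemma pedges_ne: "2 \<le> length W \<Longrightarrow> pedges W \<noteq> {}"
  by (cases W rule: pedges.cases) auto

lemma card_cycle_edges:
  assumes "distinct xs" "3 \<le> length xs"
  shows "card (cycle_edges xs) = length xs"
proof -
  let ?n = "length xs"
  let ?f = "\<lambda>i. {xs ! i, xs ! ((i + 1) mod ?n)}"
  have eq: "cycle_edges xs = ?f ` {..<?n}" unfolding cycle_edges_def by auto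
  have "inj_on ?f {..<?n}"
  proof
    fix i j assume i: "i \<in> {..<?n}" and j: "j \<in> {..<?n}" and e: "?f i = ?f j"
    have n0: "0 < ?n" using assms(2) by linarith
    have im: "(i + 1) mod ?n < ?n" "(j+1) mod ?n < ?n" using n0 by simp_all
    show "i = j"
    proof (rule ccontr)
      assume ne: "i \<noteq> j"
      then have "xs ! i \<noteq> xs ! j" using i j assms(1) nth_eq_iff_index_eq by auto
      then have "xs ! i = xs ! ((j + 1) mod ?n) \<and> xs ! ((i + 1) mod ?n) = xs ! j"
        using e by (auto simp: doubleton_eq_iff)
      then have h1: "i = (j + 1) mod ?n" "(i + 1) mod ?n = j"
        using i j im assms(1) nth_eq_iff_index_eq by auto
      have "(i + 2) mod ?n = ((i + 1) mod ?n + 1) mod ?n" by (simp add: mod_Suc_eq)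
      then have "i = (i + 2) mod ?n" using h1 by metis
      moreover have "(i + 2) mod ?n \<noteq> i"
      proof (cases "i + 2 < ?n")
        case True then show ?thesis by simp
      next
        case False
        then have "(i + 2) mod ?n = i + 2 - ?n" using i assms(2)
          by (simp add: mod_if)
        then show ?thesis using False assms(2) by simp
      qed
      ultimately show False by simp
    qed
  qed
  then show ?thesis using eq card_image by fastforce
qed


lemma cycle_verts_edges:
  assumes "xs \<noteq> []"
  shows "cycle_verts (cycle_edges xs) = set xs"
proof -
  have n0: "0 < length xs" using assms by simp
  show ?thesis
  proof
    show "cycle_verts (cycle_edges xs) \<subseteq> set xs"
      unfolding cycle_verts_def cycle_edges_def using n0 by auto
  next
    show "set xs \<subseteq> cycle_verts (cycle_edges xs)"
    proof
      fix x assume "x \<in> set xs"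
      then obtain i where "i < length xs" "xs ! i = x" by (auto simp: in_set_conv_nth)
      then show "x \<in> cycle_verts (cycle_edges xs)"
        unfolding cycle_verts_def cycle_edges_def by blast
    qed
  qed
qed

lemma cycle_edges_rotate1: "cycle_edges (rotate1 xs) = cycle_edges xs"
proof (cases xs)
  case Nil then show ?thesis by simp
next
  case (Cons x xs')
  show ?thesis
  proof (cases xs')
    case Nil then show ?thesis using Cons by simp
  next
    case (Cons y ys)
    have "cycle_edges (rotate1 xs) = pedges ((y # ys @ [x]) @ tl [x, y])"
      using Cons \<open>xs = x # xs'\<close> by (simp add: cycle_edges_pedges)
    also have "\<dots> = pedges (y # ys @ [x]) \<union> pedges [x, y]"
      by (rule pedges_append) auto
    also have "\<dots> = pedges (x # y # ys @ [x])" by (auto simp: insert_commute)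
    also have "\<dots> = cycle_edges xs"
      using Cons \<open>xs = x # xs'\<close> by (simp add: cycle_edges_pedges)
    finally show ?thesis .
  qed
qed

lemma cycle_edges_rotate: "cycle_edges (rotate k xs) = cycle_edges xs"
  by (induction k) (auto simp: cycle_edges_rotate1)

lemma rotate_front:
  assumes "a \<in> set xs"
  obtains ys where "cycle_edges ys = cycle_edges xs" "distinct ys = distinct xs" "set ys = set xs"
    "length ys = length xs" "ys = a # tl ys"
proof -
  obtain i where i: "i < length xs" "xs ! i = a" using assms by (auto simp: in_set_conv_nth)
  let ?ys = "rotate i xs"
  have ne: "?ys \<noteq> []" using assms by auto
  have "?ys ! 0 = a" using i nth_rotate[of 0 xs i] by (cases xs) auto
  then have "?ys = a # tl ?ys" using ne by (metis hd_conv_nth list.collapse)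
  then show ?thesis using that[of ?ys] by (simp add: cycle_edges_rotate)
qed

lemma glue:
  assumes "2 \<le> length Q" "2 \<le> length P" "hd P = last Q" "last P = hd Q"
    and "distinct (Q @ butlast (tl P))" and "pedges Q \<inter> pedges P = {}"
  shows "3 \<le> length (Q @ butlast (tl P)) \<and> cycle_edges (Q @ butlast (tl P)) = pedges Q \<union> pedges P"
proof
  show "3 \<le> length (Q @ butlast (tl P))"
  proof (rule ccontr)
    assume "\<not> ?thesis"
    then have "length Q = 2" "length P = 2" using assms(1,2) by auto
    then obtain a b c d where "Q = [a, b]" "P = [c, d]"
      by (metis (no_types, opaque_lifting) One_nat_def Suc_1 length_0_conv length_Suc_conv)
    then show False using assms(3,4,6) by (auto simp: insert_commute)
  qed
next
  have Qne: "Q \<noteq> []" using assms(1) by auto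
  have tP: "tl P \<noteq> []" using assms(2) by (cases P) auto
  have "(Q @ butlast (tl P)) @ [hd (Q @ butlast (tl P))] = Q @ tl P"
  proof -
    have "last (tl P) = hd Q" using tP assms(4) by (simp add: last_tl)
    moreover have "tl P = butlast (tl P) @ [last (tl P)]" using tP by simp
    ultimately show ?thesis using Qne by (metis append_assoc hd_append2)
  qed
  note eq = this
  have Pne: "P \<noteq> []" using assms(2) by auto
  have "cycle_edges (Q @ butlast (tl P)) = pedges ((Q @ butlast (tl P)) @ [hd (Q @ butlast (tl P))])"
    using Qne by (intro cycle_edges_pedges) simp
  also have "\<dots> = pedges (Q @ tl P)" using eq by simp
  also have "\<dots> = pedges Q \<union> pedges P" by (rule pedges_append[OF Qne Pne assms(3)])
  finally show "cycle_edges (Q @ butlast (tl P)) = pedges Q \<union> pedges P" .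
qed


lemma core:
  assumes dx: "distinct xs" and lx: "3 \<le> length xs" and dy: "distinct ys" and ly: "3 \<le> length ys"
    and disj: "cycle_edges xs \<inter> cycle_edges ys = {}"
    and ys0: "ys = u # tl ys" and u: "u \<in> set xs"
    and v: "v \<in> set xs" "v \<in> set ys" "v \<noteq> u"
    and ox: "odd (length xs)"
  shows "\<exists>Z. distinct Z \<and> 3 \<le> length Z \<and> set Z \<subseteq> set xs \<union> set ys \<and> odd (length Z)
     \<and> cycle_edges Z \<subseteq> cycle_edges xs \<union> cycle_edges ys
     \<and> cycle_edges Z \<inter> cycle_edges xs \<noteq> {} \<and> cycle_edges Z \<inter> cycle_edges ys \<noteq> {}"
proof -
  have y0: "ys ! 0 = u" using ys0 by (metis nth_Cons_0)
  obtain j where j: "j < length ys" "ys ! j = v" using v(2) by (auto simp: in_set_conv_nth)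
  have j0: "0 < j" using j v(3) y0 by (cases j) auto
  define m where "m = (LEAST m. 0 < m \<and> m < length ys \<and> ys ! m \<in> set xs)"
  have m: "0 < m \<and> m < length ys \<and> ys ! m \<in> set xs"
    unfolding m_def by (rule LeastI[of _ j]) (use j j0 v in auto)
  have mmin: "ys ! l \<notin> set xs" if "0 < l" "l < m" for l
  proof
    assume "ys ! l \<in> set xs"
    then have "m \<le> l" unfolding m_def using that m by (intro Least_le) auto
    then show False using that by simp
  qed
  define b where "b = ys ! m"
  define P where "P = take (Suc m) ys"
  define ps where "ps = butlast (tl P)"
  have lenP: "length P = Suc m" using m unfolding P_def by simp
  have hdP: "hd P = u" unfolding P_def using ys0 by (metis hd_take list.sel(1) zero_less_Suc)
  have lastP: "last P = b" unfolding P_def b_def using m by (simp add: take_Suc_conv_app_nth)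
  have Peq: "P = u # ps @ [b]"
  proof -
    have "P = hd P # tl P" using lenP by (cases P) auto
    moreover have "tl P = butlast (tl P) @ [last (tl P)]" using lenP m by (cases P) auto
    moreover have "last (tl P) = last P" using lenP m by (cases P) auto
    ultimately show ?thesis using hdP lastP ps_def by metis
  qed
  have lenps: "length ps = m - 1" using lenP Peq by (metis Suc_diff_1 diff_Suc_1 length_Cons length_append_singleton m nat.inject)
  have psnth: "ps ! i = ys ! Suc i" if "i < m - 1" for i
  proof -
    have "P ! Suc i = ps ! i" using that lenps Peq by (simp add: nth_append)
    moreover have "P ! Suc i = ys ! Suc i" using that unfolding P_def by simp
    ultimately show ?thesis by simp
  qed
  have psdisj: "set ps \<inter> set xs = {}"
  proof (rule ccontr)
    assume "set ps \<inter> set xs \<noteq> {}"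
    then obtain x where x: "x \<in> set ps" "x \<in> set xs" by blast
    then obtain i where "i < length ps" "ps ! i = x" by (auto simp: in_set_conv_nth)
    then have "i < m - 1" "ps ! i \<in> set xs" using lenps x by auto
    then show False using mmin[of "Suc i"] psnth by auto
  qed
  have dP: "distinct P" unfolding P_def using dy by simp
  have ub: "u \<noteq> b" using dP Peq by auto
  have bx: "b \<in> set xs" using m b_def by simp
  have pP: "pedges P \<subseteq> cycle_edges ys"
  proof -
    have e: "P = take (Suc m) (ys @ [hd ys])" unfolding P_def using m by simp
    have ne: "ys \<noteq> []" using ly by auto
    show ?thesis unfolding e cycle_edges_pedges[OF ne] by (rule pedges_take)
  qed
  obtain xs' where xs': "cycle_edges xs' = cycle_edges xs" "distinct xs' = distinct xs" "set xs' = set xs"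
    "length xs' = length xs" "xs' = b # tl xs'" using rotate_front[OF bx] by blast
  define rest where "rest = tl xs'"
  have xr: "xs' = b # rest" using xs' rest_def by simp
  have drest: "distinct rest" "b \<notin> set rest" using xr xs' dx by (metis distinct.simps(2))+
  have urest: "u \<in> set rest" using xr xs' u ub by auto
  obtain k where k: "k < length rest" "rest ! k = u" using urest by (auto simp: in_set_conv_nth)
  have W: "cycle_edges xs = pedges (b # rest @ [b])" using xs' xr cycle_edges_pedges[of xs'] by simp
  define Q1 where "Q1 = b # take (Suc k) rest"
  define Q2 where "Q2 = drop k rest @ [b]"
  have pQ1: "pedges Q1 \<subseteq> cycle_edges xs"
  proof -
    have "Q1 = take (Suc (Suc k)) (b # rest @ [b])" unfolding Q1_def using k by simp
    then show ?thesis using W pedges_take by metis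
  qed
  have pQ2: "pedges Q2 \<subseteq> cycle_edges xs"
  proof -
    have "Q2 = drop (Suc k) (b # rest @ [b])" unfolding Q2_def using k by simp
    then show ?thesis using W pedges_drop by metis
  qed
  have lQ1: "length Q1 = k + 2" unfolding Q1_def using k by simp
  have lQ2: "length Q2 = length rest - k + 1" unfolding Q2_def using k by simp
  have hQ1: "hd Q1 = b" "last Q1 = u" unfolding Q1_def using k by (auto simp: last_conv_nth)
  have hQ2: "hd Q2 = u" "last Q2 = b" unfolding Q2_def using k by (auto simp: hd_drop_conv_nth)
  have sQ1: "set Q1 \<subseteq> set xs" unfolding Q1_def using xr xs' by (auto dest: in_set_takeD)
  have sQ2: "set Q2 \<subseteq> set xs" unfolding Q2_def using xr xs' by (auto dest: in_set_dropD)
  have dQ1: "distinct Q1" unfolding Q1_def using drest by (auto dest: in_set_takeD)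
  have dQ2: "distinct Q2" unfolding Q2_def using drest by (auto dest: in_set_dropD)
  have dps: "distinct ps" using dP Peq by simp
  have lrest: "length xs = Suc (length rest)" using xr xs' by simp
  have "set ps \<subseteq> set P" using Peq by (metis Un_upper1 set_append list.set_intros(2) subsetI UnI1)
  moreover have "set P \<subseteq> set ys" unfolding P_def by (rule set_take_subset)
  ultimately have sps: "set ps \<subseteq> set ys" by blast
  have lP2: "2 \<le> length P" using lenP m by simp
  have neP: "pedges P \<noteq> {}" using pedges_ne lP2 by blast
  have prev: "pedges (rev P) = pedges P" by (rule pedges_rev)
  have A: "3 \<le> length (Q1 @ butlast (tl P)) \<and> cycle_edges (Q1 @ butlast (tl P)) = pedges Q1 \<union> pedges P"
    using dQ1 dps psdisj sQ1 lQ1 lP2 hQ1 hdP lastP pQ1 pP disj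
    by (intro glue) (auto simp: ps_def[symmetric])
  have rP: "rev P = b # rev ps @ [u]" using Peq by simp
  have B: "3 \<le> length (Q2 @ butlast (tl (rev P))) \<and> cycle_edges (Q2 @ butlast (tl (rev P))) = pedges Q2 \<union> pedges (rev P)"
    using dQ2 dps psdisj sQ2 lQ2 lP2 hQ2 rP pQ2 pP disj prev k
    by (intro glue) auto
  have neQ1: "pedges Q1 \<noteq> {}" using lQ1 by (intro pedges_ne) simp
  have neQ2: "pedges Q2 \<noteq> {}" using lQ2 k by (intro pedges_ne) simp
  have lenA: "length (Q1 @ butlast (tl P)) = k + 2 + (m - 1)" using lQ1 lenps ps_def by simp
  have lenB: "length (Q2 @ butlast (tl (rev P))) = length rest - k + 1 + (m - 1)" using lQ2 lenps rP by simp
  have par: "odd (length (Q1 @ butlast (tl P))) \<or> odd (length (Q2 @ butlast (tl (rev P))))"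
    using lenA lenB ox lrest k m by presburger
  show ?thesis
  proof (cases "odd (length (Q1 @ butlast (tl P)))")
    case True
    show ?thesis
      apply (rule exI[of _ "Q1 @ butlast (tl P)"])
      using True A dQ1 dps psdisj sQ1 sps pQ1 pP neQ1 neP disj unfolding ps_def[symmetric] by auto
  next
    case False
    then have odd: "odd (length (Q2 @ butlast (tl (rev P))))" using par by simp
    show ?thesis
      apply (rule exI[of _ "Q2 @ butlast (tl (rev P))"])
      using odd B dQ2 dps psdisj sQ2 sps pQ2 pP neQ2 neP disj prev rP by auto
  qed
qed


theorem lemma2p1:
  fixes V :: "'a set" and E :: "'a set set" and C1 C2 :: "'a set set"
  assumes "simple_graph V E"
    and "C1 \<noteq> C2"
    and "{C. odd_cycle V E C} = {C1, C2}"
    and "C1 \<inter> C2 = {}"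
  shows "card (cycle_verts C1 \<inter> cycle_verts C2) \<le> 1"
proof (rule ccontr)
  assume nc: "\<not> ?thesis"
  have o1: "odd_cycle V E C1" and o2: "odd_cycle V E C2" using assms(3) by blast+
  obtain xs where xs: "distinct xs" "3 \<le> length xs" "set xs \<subseteq> V" "cycle_edges xs \<subseteq> E"
    "C1 = cycle_edges xs" using o1 unfolding odd_cycle_def is_cycle_def by blast
  obtain ys where ys: "distinct ys" "3 \<le> length ys" "set ys \<subseteq> V" "cycle_edges ys \<subseteq> E"
    "C2 = cycle_edges ys" using o2 unfolding odd_cycle_def is_cycle_def by blast
  have ox: "odd (length xs)" using o1 xs card_cycle_edges[of xs] unfolding odd_cycle_def by simp
  have nx: "xs \<noteq> []" using xs(2) by auto
  have ny: "ys \<noteq> []" using ys(2) by auto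
  have vx: "cycle_verts C1 = set xs" unfolding xs(5) by (rule cycle_verts_edges[OF nx])
  have vy: "cycle_verts C2 = set ys" unfolding ys(5) by (rule cycle_verts_edges[OF ny])
  let ?S = "set xs \<inter> set ys"
  have fin: "finite ?S" by simp
  have "\<not> card ?S \<le> Suc 0" using nc vx vy by simp
  then obtain u v where uv: "u \<in> ?S" "v \<in> ?S" "u \<noteq> v"
    using card_le_Suc0_iff_eq[OF fin] by blast
  have uy: "u \<in> set ys" using uv by simp
  obtain ys' where ys': "cycle_edges ys' = cycle_edges ys" "distinct ys' = distinct ys" "set ys' = set ys"
    "length ys' = length ys" "ys' = u # tl ys'" using rotate_front[OF uy] by blast
  obtain Z where Z: "distinct Z" "3 \<le> length Z" "set Z \<subseteq> set xs \<union> set ys'" "odd (length Z)"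
     "cycle_edges Z \<subseteq> cycle_edges xs \<union> cycle_edges ys'"
     "cycle_edges Z \<inter> cycle_edges xs \<noteq> {}" "cycle_edges Z \<inter> cycle_edges ys' \<noteq> {}"
    using core[of xs ys' u v] xs ys ys' uv assms(4) ox by auto
  have "is_cycle V E (cycle_edges Z)"
    unfolding is_cycle_def
    using Z xs ys ys' by (intro exI[of _ Z] conjI) auto
  then have "odd_cycle V E (cycle_edges Z)"
    unfolding odd_cycle_def using Z card_cycle_edges[of Z] by simp
  then have "cycle_edges Z = C1 \<or> cycle_edges Z = C2" using assms(3) by blast
  then show False using Z xs ys ys' assms(4) by auto
qed

end
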